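(* Let $\mathcal{X},\mathcal{Y},\mathcal{U},\mathcal{Z}$ be finite sets, $(X,Y)$ with joint distribution $P_{X,Y}$ on $\mathcal{X}\times\mathcal{Y}$ ($P_X,P_Y$ full support), $f:\mathcal{X}\times\mathcal{Y}\to\mathcal{U}$, $g:\mathcal{Y}\to\mathcal{Z}$, and let $Z^n=(g(Y_t))_{t\le n}$ where $(X^n,Y^n)$ are $n$ i.i.d. copies of $(X,Y)$. Then, as $n\to\infty$, $$H_\chi(G_{[n]})=\inf_{c\in\mathcal{S}_n}H\big(c(X^n,Z^n)\big)+O(\log n).$$
   Context: A probabilistic graph is $(\mathcal{V},\mathcal{E},P_V)$ with a distribution on vertices; a coloring is a map $c$ from $\mathcal{V}$ to a finite set such that adjacent vertices receive different colors; $H_\chi(G)=\inf\{H(c(V)): c\text{ coloring of }G\}$ with $V\sim P_V$. The characteristic graph $G_{[n]}$ has vertex set $\mathcal{X}^n\times\mathcal{Z}^n$ with distribution of $(X^n,Z^n)$, and $(x^n,z^n)$, $(x'^n,z'^n)$ are adjacent iff $z^n=z'^n$ and there is $y^n$ with $g(y_t)=z_t$ for all $t$ such that $P_{X,Y}(x_t,y_t)P_{X,Y}(x'_t,y_t)>0$ for all $t\le n$ and $f(x_t,y_t)\ne f(x'_t,y_t)$ for some $t$. For $z^n\in\mathcal{Z}^n$, $T_{z^n}$ is its type (empirical distribution). $\mathcal{S}_n$ is the set of colorings of $G_{[n]}$ of the form $(x^n,z^n)\mapsto(T_{z^n},\tilde c(x^n,z^n))$ for some map $\tilde c$ from $\mathcal{X}^n\times\mathcal{Z}^n$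 into a finite set. *)

theory Defs
  imports "HOL-Probability.Probability" "HOL-Library.Landau_Symbols"
begin

definition vertices :: "nat \<Rightarrow> ('x list \<times> 'z list) set" where
  "vertices n = {(xs, zs). length xs = n \<and> length zs = n}"

definition char_adj :: "('x \<times> 'y) pmf \<Rightarrow> ('x \<Rightarrow> 'y \<Rightarrow> 'u) \<Rightarrow> ('y \<Rightarrow> 'z) \<Rightarrow> nat
    \<Rightarrow> ('x list \<times> 'z list) \<Rightarrow> ('x list \<times> 'z list) \<Rightarrow> bool" where
  "char_adj P f g n v w \<longleftrightarrow> v \<in> vertices n \<and> w \<in> vertices n \<and> snd v = snd w \<and>
     (\<exists>ys. length ys = n \<and>
        (\<forall>t<n. g (ys ! t) = snd v ! t \<and> pmf P (fst v ! t, ys ! t) * pmf P (fst w ! t, ys ! t) > 0) \<and>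
        (\<exists>t<n. f (fst v ! t) (ys ! t) \<noteq> f (fst w ! t) (ys ! t)))"

text \<open>Probability of the vertex (x^n, z^n) under (X^n, Z^n), with (X_t,Y_t) i.i.d. ~ P and Z_t = g(Y_t).\<close>
definition vprob :: "('x \<times> 'y) pmf \<Rightarrow> ('y \<Rightarrow> 'z) \<Rightarrow> nat \<Rightarrow> ('x list \<times> 'z list) \<Rightarrow> real" where
  "vprob P g n v = (\<Sum>ys | length ys = n \<and> map g ys = snd v. \<Prod>t<n. pmf P (fst v ! t, ys ! t))"

definition is_coloring :: "('x \<times> 'y) pmf \<Rightarrow> ('x \<Rightarrow> 'y \<Rightarrow> 'u) \<Rightarrow> ('y \<Rightarrow> 'z) \<Rightarrow> nat
    \<Rightarrow> ('x list \<times> 'z list \<Rightarrow> 'c) \<Rightarrow> bool" where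
  "is_coloring P f g n c \<longleftrightarrow> finite (c ` vertices n) \<and>
     (\<forall>v w. char_adj P f g n v w \<longrightarrow> c v \<noteq> c w)"

definition col_entropy :: "('x \<times> 'y) pmf \<Rightarrow> ('y \<Rightarrow> 'z) \<Rightarrow> nat \<Rightarrow> ('x list \<times> 'z list \<Rightarrow> 'c) \<Rightarrow> real" where
  "col_entropy P g n c =
     - (\<Sum>k \<in> c ` vertices n.
          let q = (\<Sum>v \<in> vertices n. if c v = k then vprob P g n v else 0) in q * log 2 q)"

text \<open>Chromatic entropy H_chi(G_[n]); colors are taken in nat (any finite color set embeds).\<close>
definition Hchi :: "('x \<times> 'y) pmf \<Rightarrow> ('x \<Rightarrow> 'y \<Rightarrow> 'u) \<Rightarrow> ('y \<Rightarrow> 'z) \<Rightarrow> nat \<Rightarrow> real" where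
  "Hchi P f g n = Inf {col_entropy P g n c | c :: 'x list \<times> 'z list \<Rightarrow> nat. is_coloring P f g n c}"

definition type_of :: "'z list \<Rightarrow> 'z \<Rightarrow> real" where
  "type_of zs = (\<lambda>a. real (count_list zs a) / real (length zs))"

definition S_col :: "('x \<times> 'y) pmf \<Rightarrow> ('x \<Rightarrow> 'y \<Rightarrow> 'u) \<Rightarrow> ('y \<Rightarrow> 'z) \<Rightarrow> nat
    \<Rightarrow> ('x list \<times> 'z list \<Rightarrow> ('z \<Rightarrow> real) \<times> nat) set" where
  "S_col P f g n = {c. is_coloring P f g n c \<and>
      (\<exists>ct :: 'x list \<times> 'z list \<Rightarrow> nat. \<forall>v \<in> vertices n. c v = (type_of (snd v), ct v))}"

definition HS :: "('x \<times> 'y) pmf \<Rightarrow> ('x \<Rightarrow> 'y \<Rightarrow> 'u) \<Rightarrow> ('y \<Rightarrow> 'z) \<Rightarrow> nat \<Rightarrow> real" where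
  "HS P f g n = Inf (col_entropy P g n ` S_col P f g n)"

end

theory Submission
  imports Defs
begin

definition ent :: "'v set \<Rightarrow> ('v \<Rightarrow> real) \<Rightarrow> ('v \<Rightarrow> 'c) \<Rightarrow> real" where
  "ent V w c = - (\<Sum>k \<in> c ` V. let q = (\<Sum>v \<in> V. if c v = k then w v else 0) in q * log 2 q)"

lemma col_entropy_ent: "col_entropy P g n c = ent (vertices n) (vprob P g n) c"
  unfolding col_entropy_def ent_def by simp

lemma key_ln:
  fixes a :: "'i \<Rightarrow> real"
  assumes fin: "finite I" and nn: "\<And>i. i \<in> I \<Longrightarrow> a i \<ge> 0"
  shows "(\<Sum>i\<in>I. a i) * ln (\<Sum>i\<in>I. a i) - (\<Sum>i\<in>I. a i) * ln (card I) \<le> (\<Sum>i\<in>I. a i * ln (a i))"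
proof (cases "(\<Sum>i\<in>I. a i) = 0")
  case True
  then have "\<forall>i\<in>I. a i = 0" using sum_nonneg_eq_0_iff[OF fin] nn by blast
  then show ?thesis using True by simp
next
  case False
  define s where "s = (\<Sum>i\<in>I. a i)"
  have spos: "s > 0" using False nn sum_nonneg[of I a] unfolding s_def by force
  have Ine: "I \<noteq> {}" using False by auto
  define N where "N = real (card I)"
  have Npos: "N > 0" using Ine fin unfolding N_def by (simp add: card_gt_0_iff)
  have each: "a i * ln (a i) \<ge> a i * ln s - a i * ln N + a i - s / N" if i: "i \<in> I" for i
  proof (cases "a i = 0")
    case True then show ?thesis using spos Npos by simp
  next
    case False
    then have ai: "a i > 0" using nn[OF i] by simp
    have "ln (s / (N * a i)) \<le> s / (N * a i) - 1"
      by (rule ln_le_minus_one) (use spos Npos ai in simp)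
    moreover have "ln (s / (N * a i)) = ln s - ln N - ln (a i)"
      using spos Npos ai by (simp add: ln_div ln_mult)
    ultimately have "ln s - ln N - ln (a i) \<le> s / (N * a i) - 1" by simp
    then have "a i * (ln s - ln N - ln (a i)) \<le> a i * (s / (N * a i) - 1)"
      using ai by (simp add: mult_left_mono)
    moreover have "a i * (s / (N * a i) - 1) = s / N - a i" using ai Npos by (simp add: field_simps)
    ultimately show ?thesis by (simp add: algebra_simps)
  qed
  have "(\<Sum>i\<in>I. a i * ln s - a i * ln N + a i - s / N) \<le> (\<Sum>i\<in>I. a i * ln (a i))"
    by (rule sum_mono) (use each in auto)
  moreover have "(\<Sum>i\<in>I. a i * ln s - a i * ln N + a i - s / N) = s * ln s - s * ln N + s - N * (s / N)"
    by (simp add: sum.distrib sum_subtractf sum_distrib_right[symmetric] s_def N_def)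
  moreover have "N * (s / N) = s" using Npos by simp
  ultimately show ?thesis unfolding s_def N_def by simp
qed

lemma key_log:
  fixes a :: "'i \<Rightarrow> real"
  assumes fin: "finite I" and nn: "\<And>i. i \<in> I \<Longrightarrow> a i \<ge> 0"
  shows "- (\<Sum>i\<in>I. a i * log 2 (a i)) \<le> - ((\<Sum>i\<in>I. a i) * log 2 (\<Sum>i\<in>I. a i)) + (\<Sum>i\<in>I. a i) * log 2 (card I)"
proof -
  have l2: "ln (2::real) > 0" by simp
  have "(\<Sum>i\<in>I. a i * log 2 (a i)) = (\<Sum>i\<in>I. a i * ln (a i)) / ln 2"
    by (simp add: log_def sum_divide_distrib)
  moreover have "((\<Sum>i\<in>I. a i) * log 2 (\<Sum>i\<in>I. a i)) - (\<Sum>i\<in>I. a i) * log 2 (card I)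
     = ((\<Sum>i\<in>I. a i) * ln (\<Sum>i\<in>I. a i) - (\<Sum>i\<in>I. a i) * ln (card I)) / ln 2"
    by (simp add: log_def diff_divide_distrib)
  moreover have "((\<Sum>i\<in>I. a i) * ln (\<Sum>i\<in>I. a i) - (\<Sum>i\<in>I. a i) * ln (card I)) / ln 2
      \<le> (\<Sum>i\<in>I. a i * ln (a i)) / ln 2"
    using key_ln[OF fin nn] l2 by (simp add: divide_right_mono)
  ultimately show ?thesis by linarith
qed

lemma ent_nonneg:
  assumes fin: "finite V" and nn: "\<And>v. v \<in> V \<Longrightarrow> w v \<ge> 0" and le1: "sum w V \<le> 1"
  shows "ent V w c \<ge> 0"
proof -
  have "(let q = (\<Sum>v \<in> V. if c v = k then w v else 0) in q * log 2 q) \<le> 0" for k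
  proof -
    define q where "q = (\<Sum>v \<in> V. if c v = k then w v else 0)"
    have q0: "q \<ge> 0" unfolding q_def by (rule sum_nonneg) (use nn in auto)
    have "q \<le> sum w V" unfolding q_def by (rule sum_mono) (use nn in auto)
    then have q1: "q \<le> 1" using le1 by simp
    have "q * log 2 q \<le> 0"
    proof (cases "q = 0")
      case False
      then have "log 2 q \<le> 0" using q0 q1 by simp
      then show ?thesis using q0 by (simp add: mult_nonneg_nonpos)
    qed simp
    then show ?thesis unfolding q_def Let_def .
  qed
  then show ?thesis unfolding ent_def by (simp add: sum_nonpos)
qed

lemma ent_relabel:
  assumes inj: "inj_on h (c ` V)"
  shows "ent V w (h \<circ> c) = ent V w c"
proof -
  have img: "(h \<circ> c) ` V = h ` (c ` V)" by auto
  have "(\<Sum>k \<in> (h \<circ> c) ` V. let q = (\<Sum>v \<in> V. if (h \<circ> c) v = k then w v else 0) in q * log 2 q)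
      = (\<Sum>k \<in> c ` V. let q = (\<Sum>v \<in> V. if (h \<circ> c) v = h k then w v else 0) in q * log 2 q)"
    unfolding img by (subst sum.reindex[OF inj]) simp
  also have "\<dots> = (\<Sum>k \<in> c ` V. let q = (\<Sum>v \<in> V. if c v = k then w v else 0) in q * log 2 q)"
  proof (rule sum.cong[OF refl])
    fix k assume k: "k \<in> c ` V"
    have "(\<Sum>v \<in> V. if (h \<circ> c) v = h k then w v else 0) = (\<Sum>v \<in> V. if c v = k then w v else 0)"
    proof (rule sum.cong[OF refl])
      fix v assume "v \<in> V"
      then have "(h (c v) = h k) = (c v = k)" using inj k by (meson image_eqI inj_on_eq_iff)
      then show "(if (h \<circ> c) v = h k then w v else 0) = (if c v = k then w v else 0)" by simp
    qed
    then show "(let q = (\<Sum>v \<in> V. if (h \<circ> c) v = h k then w v else 0) in q * log 2 q)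
        = (let q = (\<Sum>v \<in> V. if c v = k then w v else 0) in q * log 2 q)" by simp
  qed
  finally show ?thesis unfolding ent_def by simp
qed

lemma ent_pair:
  assumes fin: "finite V" and nn: "\<And>v. v \<in> V \<Longrightarrow> w v \<ge> 0"
  shows "ent V w (\<lambda>v. (tp v, c v)) \<le> ent V w c + sum w V * log 2 (card (tp ` V))"
proof -
  define T where "T = tp ` V"
  define K where "K = c ` V"
  have fT: "finite T" and fK: "finite K" using fin unfolding T_def K_def by auto
  define r where "r = (\<lambda>\<tau> k. \<Sum>v \<in> V. if tp v = \<tau> \<and> c v = k then w v else 0)"
  define q where "q = (\<lambda>k. \<Sum>v \<in> V. if c v = k then w v else 0)"
  define H where "H = (\<lambda>x::real. x * log 2 x)"
  have rnn: "r \<tau> k \<ge> 0" for \<tau> k unfolding r_def by (rule sum_nonneg) (use nn in auto)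
  have e1: "ent V w (\<lambda>v. (tp v, c v)) = - (\<Sum>p \<in> (\<lambda>v. (tp v, c v)) ` V. H (r (fst p) (snd p)))"
    unfolding ent_def r_def H_def by (intro arg_cong[where f=uminus] sum.cong) (auto simp: Let_def)
  have "(\<Sum>p \<in> (\<lambda>v. (tp v, c v)) ` V. H (r (fst p) (snd p))) = (\<Sum>p \<in> T \<times> K. H (r (fst p) (snd p)))"
  proof (rule sum.mono_neutral_left)
    show "finite (T \<times> K)" using fT fK by simp
    show "(\<lambda>v. (tp v, c v)) ` V \<subseteq> T \<times> K" unfolding T_def K_def by auto
    show "\<forall>p\<in>T \<times> K - (\<lambda>v. (tp v, c v)) ` V. H (r (fst p) (snd p)) = 0"
    proof
      fix p assume p: "p \<in> T \<times> K - (\<lambda>v. (tp v, c v)) ` V"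
      have "r (fst p) (snd p) = 0" unfolding r_def
        by (rule sum.neutral) (use p in force)
      then show "H (r (fst p) (snd p)) = 0" unfolding H_def by simp
    qed
  qed
  also have "\<dots> = (\<Sum>k\<in>K. \<Sum>\<tau>\<in>T. H (r \<tau> k))"
    proof -
    have "(\<Sum>p \<in> T \<times> K. H (r (fst p) (snd p))) = (\<Sum>\<tau>\<in>T. \<Sum>k\<in>K. H (r \<tau> k))"
      by (simp add: sum.cartesian_product case_prod_unfold)
    also have "\<dots> = (\<Sum>k\<in>K. \<Sum>\<tau>\<in>T. H (r \<tau> k))" by (rule sum.swap)
    finally show ?thesis .
  qed
  finally have e2: "ent V w (\<lambda>v. (tp v, c v)) = - (\<Sum>k\<in>K. \<Sum>\<tau>\<in>T. H (r \<tau> k))" using e1 by simp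
  have rq: "(\<Sum>\<tau>\<in>T. r \<tau> k) = q k" for k
  proof -
    have "(\<Sum>\<tau>\<in>T. r \<tau> k) = (\<Sum>v \<in> V. \<Sum>\<tau>\<in>T. if tp v = \<tau> \<and> c v = k then w v else 0)"
      unfolding r_def by (rule sum.swap)
    also have "\<dots> = (\<Sum>v \<in> V. if c v = k then w v else 0)"
    proof (rule sum.cong[OF refl])
      fix v assume v: "v \<in> V"
      have "(\<Sum>\<tau>\<in>T. if tp v = \<tau> \<and> c v = k then w v else 0) = (\<Sum>\<tau>\<in>T. if \<tau> = tp v then (if c v = k then w v else 0) else 0)"
        by (rule sum.cong) auto
      also have "\<dots> = (if c v = k then w v else 0)" using v fT unfolding T_def by simp
      finally show "(\<Sum>\<tau>\<in>T. if tp v = \<tau> \<and> c v = k then w v else 0) = (if c v = k then w v else 0)" .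
    qed
    finally show ?thesis unfolding q_def .
  qed
  have qsum: "(\<Sum>k\<in>K. q k) = sum w V"
  proof -
    have "(\<Sum>k\<in>K. q k) = (\<Sum>v \<in> V. \<Sum>k\<in>K. if c v = k then w v else 0)"
      unfolding q_def by (rule sum.swap)
    also have "\<dots> = (\<Sum>v \<in> V. w v)"
    proof (rule sum.cong[OF refl])
      fix v assume v: "v \<in> V"
      have "(\<Sum>k\<in>K. if c v = k then w v else 0) = (\<Sum>k\<in>K. if k = c v then w v else 0)"
        by (rule sum.cong) auto
      also have "\<dots> = w v" using v fK unfolding K_def by simp
      finally show "(\<Sum>k\<in>K. if c v = k then w v else 0) = w v" .
    qed
    finally show ?thesis .
  qed
  have each: "- (\<Sum>\<tau>\<in>T. H (r \<tau> k)) \<le> - H (q k) + q k * log 2 (card T)" for k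
    using key_log[OF fT, of "\<lambda>\<tau>. r \<tau> k"] rnn unfolding H_def rq by simp
  have "- (\<Sum>k\<in>K. \<Sum>\<tau>\<in>T. H (r \<tau> k)) = (\<Sum>k\<in>K. - (\<Sum>\<tau>\<in>T. H (r \<tau> k)))"
    by (simp add: sum_negf)
  also have "\<dots> \<le> (\<Sum>k\<in>K. - H (q k) + q k * log 2 (card T))"
    by (rule sum_mono) (rule each)
  also have "\<dots> = - (\<Sum>k\<in>K. H (q k)) + (\<Sum>k\<in>K. q k) * log 2 (card T)"
    by (simp add: sum.distrib sum_negf sum_distrib_right sum_subtractf)
  also have "- (\<Sum>k\<in>K. H (q k)) = ent V w c"
    unfolding ent_def K_def H_def q_def by (simp add: Let_def)
  finally show ?thesis using e2 qsum unfolding T_def by simp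
qed

lemma finite_len[simp]: "finite {xs :: 'a::finite list. length xs = n}"
  using finite_lists_length_eq[of "UNIV :: 'a set" n] by simp

lemma lists_Suc_img: "{xs :: 'a list. length xs = Suc n} = (\<lambda>(x, xs). x # xs) ` (UNIV \<times> {xs. length xs = n})"
  by (auto simp: length_Suc_conv image_iff)

lemma sum_lists_Suc:
  fixes G :: "'a::finite list \<Rightarrow> real"
  shows "(\<Sum>xs \<in> {xs. length xs = Suc n}. G xs) = (\<Sum>x\<in>UNIV. \<Sum>xs \<in> {xs. length xs = n}. G (x # xs))"
proof -
  have inj: "inj_on (\<lambda>(x, xs). x # xs) (UNIV \<times> {xs :: 'a list. length xs = n})"
    by (auto simp: inj_on_def)
  show ?thesis
    unfolding lists_Suc_img sum.reindex[OF inj] sum.cartesian_product by (rule sum.cong) auto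
qed

lemma prod_sum_lists:
  fixes F :: "'a::finite \<Rightarrow> 'b::finite \<Rightarrow> real"
  shows "(\<Sum>xs \<in> {xs. length xs = n}. \<Sum>ys \<in> {ys. length ys = n}. \<Prod>t<n. F (xs!t) (ys!t))
     = (\<Sum>x\<in>UNIV. \<Sum>y\<in>UNIV. F x y) ^ n"
proof (induction n)
  case 0
  then show ?case by simp
next
  case (Suc n)
  have "(\<Sum>xs \<in> {xs. length xs = Suc n}. \<Sum>ys \<in> {ys. length ys = Suc n}. \<Prod>t<Suc n. F (xs!t) (ys!t))
     = (\<Sum>x\<in>UNIV. \<Sum>xs \<in> {xs. length xs = n}. \<Sum>y\<in>UNIV. \<Sum>ys \<in> {ys. length ys = n}.
          F x y * (\<Prod>t<n. F (xs!t) (ys!t)))"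
    by (simp add: sum_lists_Suc prod.lessThan_Suc_shift del: prod.lessThan_Suc)
  also have "\<dots> = (\<Sum>x\<in>UNIV. \<Sum>y\<in>UNIV. F x y * (\<Sum>xs \<in> {xs. length xs = n}. \<Sum>ys \<in> {ys. length ys = n}.
          (\<Prod>t<n. F (xs!t) (ys!t))))"
  proof (rule sum.cong[OF refl])
    fix x
    have "(\<Sum>xs \<in> {xs. length xs = n}. \<Sum>y\<in>UNIV. \<Sum>ys \<in> {ys. length ys = n}.
          F x y * (\<Prod>t<n. F (xs!t) (ys!t))) = (\<Sum>xs \<in> {xs. length xs = n}. \<Sum>y\<in>UNIV.
          F x y * (\<Sum>ys \<in> {ys. length ys = n}. \<Prod>t<n. F (xs!t) (ys!t)))"
      by (simp only: sum_distrib_left)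
    also have "\<dots> = (\<Sum>y\<in>UNIV. \<Sum>xs \<in> {xs. length xs = n}.
          F x y * (\<Sum>ys \<in> {ys. length ys = n}. \<Prod>t<n. F (xs!t) (ys!t)))"
      by (rule sum.swap)
    also have "\<dots> = (\<Sum>y\<in>UNIV. F x y * (\<Sum>xs \<in> {xs. length xs = n}.
          \<Sum>ys \<in> {ys. length ys = n}. \<Prod>t<n. F (xs!t) (ys!t)))"
      by (simp only: sum_distrib_left)
    finally show "(\<Sum>xs \<in> {xs. length xs = n}. \<Sum>y\<in>UNIV. \<Sum>ys \<in> {ys. length ys = n}.
          F x y * (\<Prod>t<n. F (xs!t) (ys!t))) = (\<Sum>y\<in>UNIV. F x y * (\<Sum>xs \<in> {xs. length xs = n}.
          \<Sum>ys \<in> {ys. length ys = n}. \<Prod>t<n. F (xs!t) (ys!t)))" .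
  qed
  also have "\<dots> = (\<Sum>x\<in>UNIV. \<Sum>y\<in>UNIV. F x y) ^ Suc n"
    by (simp add: Suc sum_distrib_right)
  finally show ?case .
qed

lemma finite_vertices: "finite (vertices n :: ('x::finite list \<times> 'z::finite list) set)"
proof -
  have "vertices n = {xs :: 'x list. length xs = n} \<times> {zs :: 'z list. length zs = n}"
    unfolding vertices_def by auto
  then show ?thesis by simp
qed

lemma vprob_nonneg: "vprob P g n v \<ge> 0"
  unfolding vprob_def by (intro sum_nonneg prod_nonneg) auto

lemma vprob_sum:
  fixes P :: "('x::finite \<times> 'y::finite) pmf" and g :: "'y \<Rightarrow> 'z::finite"
  shows "sum (vprob P g n) (vertices n) = 1"
proof -
  define F where "F = (\<lambda>xs ys. \<Prod>t<n. pmf P (xs ! t, ys ! t))"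
  define Lx where "Lx = {xs :: 'x list. length xs = n}"
  define Ly where "Ly = {ys :: 'y list. length ys = n}"
  define Lz where "Lz = {zs :: 'z list. length zs = n}"
  have fLy: "finite Ly" "finite Lz" unfolding Ly_def Lz_def by simp_all
  have V: "vertices n = Lx \<times> Lz" unfolding vertices_def Lx_def Lz_def by auto
  have inner: "(\<Sum>zs\<in>Lz. \<Sum>ys | length ys = n \<and> map g ys = zs. F xs ys) = (\<Sum>ys\<in>Ly. F xs ys)" for xs
  proof -
    have "(\<Sum>zs\<in>Lz. \<Sum>ys | length ys = n \<and> map g ys = zs. F xs ys)
        = (\<Sum>zs\<in>Lz. \<Sum>ys\<in>Ly. if map g ys = zs then F xs ys else 0)"
    proof (rule sum.cong[OF refl])
      fix zs
      have "{ys. length ys = n \<and> map g ys = zs} = {ys \<in> Ly. map g ys = zs}" unfolding Ly_def by auto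
      then show "(\<Sum>ys | length ys = n \<and> map g ys = zs. F xs ys) = (\<Sum>ys\<in>Ly. if map g ys = zs then F xs ys else 0)"
        using fLy by (simp add: sum.inter_filter)
    qed
    also have "\<dots> = (\<Sum>ys\<in>Ly. \<Sum>zs\<in>Lz. if map g ys = zs then F xs ys else 0)" by (rule sum.swap)
    also have "\<dots> = (\<Sum>ys\<in>Ly. F xs ys)"
    proof (rule sum.cong[OF refl])
      fix ys assume "ys \<in> Ly"
      then have "map g ys \<in> Lz" unfolding Ly_def Lz_def by simp
      then show "(\<Sum>zs\<in>Lz. if map g ys = zs then F xs ys else 0) = F xs ys" using fLy by simp
    qed
    finally show ?thesis .
  qed
  have "sum (vprob P g n) (vertices n) = (\<Sum>xs\<in>Lx. \<Sum>zs\<in>Lz. \<Sum>ys | length ys = n \<and> map g ys = zs. F xs ys)"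
    unfolding V vprob_def F_def sum.cartesian_product by (rule sum.cong) auto
  also have "\<dots> = (\<Sum>xs\<in>Lx. \<Sum>ys\<in>Ly. F xs ys)" using inner by simp
  also have "\<dots> = (\<Sum>x\<in>UNIV. \<Sum>y\<in>UNIV. pmf P (x, y)) ^ n"
    unfolding Lx_def Ly_def F_def by (rule prod_sum_lists)
  also have "(\<Sum>x\<in>UNIV. \<Sum>y\<in>UNIV. pmf P (x, y)) = sum (pmf P) UNIV"
    unfolding UNIV_Times_UNIV[symmetric] sum.cartesian_product by (rule sum.cong) auto
  also have "sum (pmf P) UNIV = 1" by (rule sum_pmf_eq_1) auto
  finally show ?thesis by simp
qed

lemma card_types:
  "card (type_of ` snd ` (vertices n :: ('x list \<times> 'z::finite list) set)) \<le> (n + 1) ^ CARD('z)"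
proof -
  define M where "M = (PiE UNIV (\<lambda>_::'z. {..n}))"
  have sub: "type_of ` snd ` (vertices n :: ('x list \<times> 'z list) set) \<subseteq> (\<lambda>\<phi> a. real (\<phi> a) / real n) ` M"
  proof
    fix t assume "t \<in> type_of ` snd ` (vertices n :: ('x list \<times> 'z list) set)"
    then obtain v where v: "v \<in> (vertices n :: ('x list \<times> 'z list) set)" "t = type_of (snd v)" by auto
    define zs where "zs = snd v"
    have zs: "length zs = n" "t = type_of zs" using v unfolding zs_def vertices_def by auto
    have "(\<lambda>a. count_list zs a) \<in> M" unfolding M_def PiE_UNIV_domain
      using count_le_length[of zs] zs by auto
    moreover have "t = (\<lambda>a. real ((\<lambda>a. count_list zs a) a) / real n)" using zs unfolding type_of_def by simp
    ultimately show "t \<in> (\<lambda>\<phi> a. real (\<phi> a) / real n) ` M" by blast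
  qed
  have fM: "finite M" unfolding M_def by (rule finite_PiE) auto
  have "card (type_of ` snd ` (vertices n :: ('x list \<times> 'z list) set)) \<le> card ((\<lambda>\<phi> a. real (\<phi> a) / real n) ` M)"
    by (rule card_mono[OF _ sub]) (use fM in simp)
  also have "\<dots> \<le> card M" by (rule card_image_le[OF fM])
  also have "card M = (n + 1) ^ CARD('z)" unfolding M_def by (simp add: card_PiE)
  finally show ?thesis .
qed

lemma char_adj_neq: "char_adj P f g n v w \<Longrightarrow> v \<noteq> w \<and> v \<in> vertices n \<and> w \<in> vertices n"
  unfolding char_adj_def by auto

lemma bounds:
  fixes P :: "('x::finite \<times> 'y::finite) pmf" and f :: "'x \<Rightarrow> 'y \<Rightarrow> 'u" and g :: "'y \<Rightarrow> 'z::finite"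
  shows "Hchi P f g n \<le> HS P f g n \<and>
    HS P f g n \<le> Hchi P f g n + log 2 (card (type_of ` snd ` (vertices n :: ('x list \<times> 'z list) set)))"
proof -
  define V where "V = (vertices n :: ('x list \<times> 'z list) set)"
  define L where "L = log 2 (card (type_of ` snd ` V))"
  define A where "A = {col_entropy P g n c | c :: 'x list \<times> 'z list \<Rightarrow> nat. is_coloring P f g n c}"
  define B where "B = col_entropy P g n ` S_col P f g n"
  have HA: "Hchi P f g n = Inf A" unfolding Hchi_def A_def ..
  have HB: "HS P f g n = Inf B" unfolding HS_def B_def ..
  have fV: "finite V" unfolding V_def by (rule finite_vertices)
  have nonneg: "col_entropy P g n c \<ge> 0" for c :: "'x list \<times> 'z list \<Rightarrow> 'c"
    unfolding col_entropy_ent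
    by (rule ent_nonneg[OF finite_vertices]) (auto simp: vprob_nonneg vprob_sum)
  have bddA: "bdd_below A" unfolding A_def bdd_below_def using nonneg by blast
  have bddB: "bdd_below B" unfolding B_def bdd_below_def using nonneg by blast
  have injV: "inj_on (to_nat_on V) V" using fV by (intro inj_on_to_nat_on countable_finite)
  have col0: "is_coloring P f g n (to_nat_on V)"
    unfolding is_coloring_def using fV injV char_adj_neq unfolding V_def inj_on_def by blast
  then have Ane: "A \<noteq> {}" unfolding A_def by blast
  have "(\<lambda>v. (type_of (snd v), to_nat_on V v)) \<in> S_col P f g n"
    unfolding S_col_def
  proof (intro CollectI conjI exI ballI)
    show "is_coloring P f g n (\<lambda>v. (type_of (snd v), to_nat_on V v))" unfolding is_coloring_def
    proof (intro conjI allI impI)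
      show "finite ((\<lambda>v. (type_of (snd v), to_nat_on V v)) ` vertices n)" using fV unfolding V_def by simp
      fix v w assume adj: "char_adj P f g n v w"
      then have "to_nat_on V v \<noteq> to_nat_on V w" using char_adj_neq[OF adj] injV unfolding V_def inj_on_def by blast
      then show "(type_of (snd v), to_nat_on V v) \<noteq> (type_of (snd w), to_nat_on V w)" by simp
    qed
    fix v show "(type_of (snd v), to_nat_on V v) = (type_of (snd v), to_nat_on V v)" ..
  qed
  then have Bne: "B \<noteq> {}" unfolding B_def by blast
  have part1: "Inf A \<le> Inf B"
  proof (rule cInf_greatest[OF Bne])
    fix b assume "b \<in> B"
    then obtain c where c: "c \<in> S_col P f g n" and b: "b = col_entropy P g n c" unfolding B_def by blast
    have cc: "is_coloring P f g n c" using c unfolding S_col_def by blast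
    define h where "h = to_nat_on (c ` V)"
    have injh: "inj_on h (c ` V)" unfolding h_def using fV by (intro inj_on_to_nat_on countable_finite) simp
    have "is_coloring P f g n (h \<circ> c)"
      unfolding is_coloring_def
    proof (intro conjI allI impI)
      show "finite ((h \<circ> c) ` vertices n)" using fV unfolding V_def by simp
      fix v w assume adj: "char_adj P f g n v w"
      then have "c v \<noteq> c w" using cc unfolding is_coloring_def by blast
      moreover have "v \<in> V" "w \<in> V" using char_adj_neq[OF adj] unfolding V_def by auto
      ultimately show "(h \<circ> c) v \<noteq> (h \<circ> c) w" using injh unfolding inj_on_def by auto
    qed
    moreover have "col_entropy P g n (h \<circ> c) = b"
      unfolding b col_entropy_ent using ent_relabel[OF injh[unfolded V_def]] .
    ultimately have "b \<in> A" unfolding A_def by blast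
    then show "Inf A \<le> b" by (rule cInf_lower[OF _ bddA])
  qed
  have part2: "Inf B - L \<le> Inf A"
  proof (rule cInf_greatest[OF Ane])
    fix a assume "a \<in> A"
    then obtain c :: "'x list \<times> 'z list \<Rightarrow> nat" where cc: "is_coloring P f g n c" and a: "a = col_entropy P g n c"
      unfolding A_def by blast
    define c' where "c' = (\<lambda>v. (type_of (snd v), c v))"
    have "c' \<in> S_col P f g n"
      unfolding S_col_def
    proof (intro CollectI conjI exI ballI)
      show "is_coloring P f g n c'" unfolding is_coloring_def
      proof (intro conjI allI impI)
        show "finite (c' ` vertices n)" using fV unfolding V_def by simp
        fix v w assume adj: "char_adj P f g n v w"
        then have "c v \<noteq> c w" using cc unfolding is_coloring_def by blast
        then show "c' v \<noteq> c' w" unfolding c'_def by simp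
      qed
      fix v show "c' v = (type_of (snd v), c v)" unfolding c'_def ..
    qed
    then have "Inf B \<le> col_entropy P g n c'" unfolding B_def
      by (intro cInf_lower[OF _ bddB[unfolded B_def]]) blast
    also have "col_entropy P g n c' \<le> a + 1 * L"
    proof -
      have "ent V (vprob P g n) c' \<le> ent V (vprob P g n) c + sum (vprob P g n) V * log 2 (card ((\<lambda>v. type_of (snd v)) ` V))"
        unfolding c'_def by (rule ent_pair[OF fV]) (simp add: vprob_nonneg)
      moreover have "(\<lambda>v. type_of (snd v)) ` V = type_of ` snd ` V" by auto
      ultimately show ?thesis
        unfolding a col_entropy_ent L_def using vprob_sum[of P g n] unfolding V_def by simp
    qed
    finally show "Inf B - L \<le> a" by simp
  qed
  show ?thesis using part1 part2 HA HB unfolding L_def V_def by simp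
qed

theorem lemma1:
  fixes P :: "('x::finite \<times> 'y::finite) pmf"
    and f :: "'x \<Rightarrow> 'y \<Rightarrow> 'u::finite"
    and g :: "'y \<Rightarrow> 'z::finite"
  assumes "\<forall>x. \<exists>y. pmf P (x, y) > 0"
    and "\<forall>y. \<exists>x. pmf P (x, y) > 0"
  shows "(\<lambda>n. HS P f g n - Hchi P f g n) \<in> O(\<lambda>n. ln (real n))"
proof (rule bigoI)
  define K where "K = real CARD('z)"
  show "eventually (\<lambda>n. norm (HS P f g n - Hchi P f g n) \<le> (2 * K / ln 2) * norm (ln (real n))) at_top"
    using eventually_ge_at_top[of "2::nat"]
  proof eventually_elim
    case (elim n)
    define T where "T = card (type_of ` snd ` (vertices n :: ('x list \<times> 'z list) set))"
    have b: "Hchi P f g n \<le> HS P f g n" "HS P f g n \<le> Hchi P f g n + log 2 T"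
      using bounds[of P f g n] unfolding T_def by auto
    have n2: "real n \<ge> 2" using elim by simp
    have lnpos: "ln (real n) > 0" using n2 by simp
    have "log 2 T \<le> K * log 2 (real n + 1)"
    proof (cases "T = 0")
      case True
      have "log 2 (real n + 1) \<ge> 0" using n2 by simp
      then show ?thesis using True unfolding K_def by (simp add: log_def)
    next
      case False
      have "real T \<le> real ((n + 1) ^ CARD('z))" using card_types[where 'x='x and 'z='z, of n] unfolding T_def of_nat_le_iff .
      then have "log 2 T \<le> log 2 ((real n + 1) ^ CARD('z))" using False by (simp add: add.commute)
      also have "\<dots> = K * log 2 (real n + 1)" unfolding K_def by (simp add: log_nat_power)
      finally show ?thesis .
    qed
    also have "log 2 (real n + 1) \<le> log 2 (real n ^ 2)"
    proof -
      have "real n * 2 \<le> real n * real n" using n2 by (intro mult_left_mono) auto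
      then have "real n + 1 \<le> real n ^ 2" using n2 unfolding power2_eq_square by linarith
      then show ?thesis using n2 by simp
    qed
    also have "log 2 (real n ^ 2) = 2 * ln (real n) / ln 2" using n2 by (simp add: log_def ln_realpow)
    finally have "log 2 T \<le> K * (2 * ln (real n) / ln 2)" using n2 unfolding K_def by (simp add: mult_left_mono)
    moreover have "norm (HS P f g n - Hchi P f g n) = HS P f g n - Hchi P f g n" using b by simp
    moreover have "(2 * K / ln 2) * norm (ln (real n)) = K * (2 * ln (real n) / ln 2)" using lnpos by simp
    ultimately show ?case using b by linarith
  qed
qed

end
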